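(* Let $C=\{c_1,\dots,c_m\}\subset\Delta_d$ be a finite nonempty set and let $v\in\Delta_d$ with $v\in\mathrm{Cone}(C)$. Then $\max_{c\in C}v^\top c\ge\frac1d$.
   Context: $\Delta_d=\{x\in\mathbb{R}^d_{\ge 0}:\sum_i x^i=1\}$; $\mathrm{Cone}(C)$ is the set of nonnegative linear combinations of elements of $C$. *)

theory Defs
  imports "HOL-Analysis.Analysis"
begin

text \<open>The probability prob_simplex in R^d, with d = CARD('n).\<close>
definition prob_simplex :: "(real ^ 'n) set" where
  "prob_simplex = {x. (\<forall>i. 0 \<le> x $ i) \<and> (\<Sum>i\<in>UNIV. x $ i) = 1}"

definition nonneg_cone :: "(real ^ 'n) set \<Rightarrow> (real ^ 'n) set" where
  "nonneg_cone C = {x. \<exists>u. (\<forall>c\<in>C. 0 \<le> u c) \<and> x = (\<Sum>c\<in>C. u c *\<^sub>R c)}"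

end

theory Submission imports Defs begin
lemma sq_bound:
  fixes v :: "real ^ 'n"
  assumes "(\<Sum>i\<in>UNIV. v $ i) = 1"
  shows "v \<bullet> v \<ge> 1 / real CARD('n)"
proof -
  define d where "d = real CARD('n)"
  have dpos: "d > 0" unfolding d_def by simp
  have "0 \<le> (\<Sum>i\<in>UNIV. (v $ i - 1/d)^2)" by (simp add: sum_nonneg)
  also have "\<dots> = (\<Sum>i\<in>UNIV. v $ i * v $ i - 2/d * v $ i + 1/d^2)"
    using dpos by (intro sum.cong) (auto simp: power2_eq_square field_simps)
  also have "\<dots> = (\<Sum>i\<in>UNIV. v $ i * v $ i) - 2/d * (\<Sum>i\<in>UNIV. v $ i) + d * (1/d^2)"
    by (simp add: sum.distrib sum_subtractf sum_distrib_left d_def)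
  also have "\<dots> = v \<bullet> v - 1/d"
    using assms dpos by (simp add: inner_vec_def power2_eq_square)
  finally show ?thesis unfolding d_def by simp
qed
theorem lemma1:
  fixes C :: "(real ^ 'n) set" and v :: "real ^ 'n"
  assumes "finite C" and "C \<noteq> {}" and "C \<subseteq> prob_simplex"
    and "v \<in> prob_simplex" and "v \<in> nonneg_cone C"
  shows "Max ((\<lambda>c. v \<bullet> c) ` C) \<ge> 1 / real CARD('n)"
proof -
  obtain u where u: "\<forall>c\<in>C. 0 \<le> u c" and vu: "v = (\<Sum>c\<in>C. u c *\<^sub>R c)"
    using assms(5) unfolding nonneg_cone_def by blast
  have vs: "(\<Sum>i\<in>UNIV. v $ i) = 1" using assms(4) unfolding prob_simplex_def by blast
  have cs: "\<And>c. c \<in> C \<Longrightarrow> (\<Sum>i\<in>UNIV. c $ i) = 1" using assms(3) unfolding prob_simplex_def by blast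
  define M where "M = Max ((\<lambda>c. v \<bullet> c) ` C)"
  have Mge: "\<And>c. c \<in> C \<Longrightarrow> v \<bullet> c \<le> M" unfolding M_def using assms(1) by simp
  have "(\<Sum>i\<in>UNIV. v $ i) = (\<Sum>i\<in>UNIV. \<Sum>c\<in>C. u c * c $ i)"
    by (simp add: vu sum_component)
  also have "\<dots> = (\<Sum>c\<in>C. u c * (\<Sum>i\<in>UNIV. c $ i))"
    by (subst sum.swap) (simp add: sum_distrib_left)
  also have "\<dots> = (\<Sum>c\<in>C. u c)" using cs by simp
  finally have us: "(\<Sum>c\<in>C. u c) = 1" using vs by simp
  have "v \<bullet> v = (\<Sum>c\<in>C. u c * (v \<bullet> c))"
    by (subst (2) vu) (simp add: inner_sum_right)
  also have "\<dots> \<le> (\<Sum>c\<in>C. u c * M)"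
    by (rule sum_mono) (simp add: u Mge mult_left_mono)
  also have "\<dots> = M" using us by (simp add: sum_distrib_right[symmetric])
  finally show ?thesis using sq_bound[OF vs] unfolding M_def by linarith
qed

end
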